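(* Let $G$ be an SE-graph and let $P,Q$ be standard, weakly intersecting directed paths in $G$ with $\alpha(t_P)=\alpha(s_Q)$ and $\beta(t_P)<\beta(s_Q)$. Then $w(P)w(Q)=q^{-1}\,w(Q)w(P)$.
   Context: Fix a field $\mathbb K$, $q\in\mathbb K^\ast$. An SE-graph is a finite directed graph $G=(V,E)$ embedded in the plane (planar) whose edges are horizontal directed to the right (H-edges) or vertical directed downward (V-edges), with sources $r_1,\dots,r_m$ on a vertical line in this order upward and sinks $c_1,\dots,c_n$ on a horizontal line in order left to right, sources incident only to H-edges and sinks only to V-edges, every vertex lying on a directed source-to-sink path. Here the sources lie on the ray $\{0\}\times\mathbb R_{\ge0}$ and the sinks on the ray $\mathbb R_{\ge 0}\times\{0\}$; a point $v$ has coordinates $(\alpha(v),\beta(v))$. Standing convention: two vertices have the same first (resp. second) coordinate if and only if they lie on a common vertical (resp. horizontal) directed path of $G$. Let $W$ be the inner vertices; $\mathcal L_G$ is the $\mathbb K$-algebra of Laurent polynomials in $W$ with, for distinct $u,v\in W$: $uv=qvu$ if there is a directed horizontal path from $u$ to $v$; $vu=quv$ if there is a directed vertical path from $u$ to $v$; $uv=vu$ otherwise. Edge weights: $w(e)=v$ if $e=(u,v)$ with $u$ a source; $w(e)=u^{-1}v$ for an H-edge $e=(u,v)$ with $u,v\in W$; $w(e)=1$ for V-edges. The weight of a directed path is the ordered product of its edge weights. For a directed path $P$, $s_P,t_P$ are its first and last vertices; $P$ is standard if it has at least one H-edge. $P,Q$ are weakly intersecting if $P\cap Q=\{s_P,t_P\}\cap\{s_Q,t_Q\}$.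 *)

theory Defs
  imports "HOL-Analysis.Analysis"
begin

definition pt :: "('v \<Rightarrow> real) \<Rightarrow> ('v \<Rightarrow> real) \<Rightarrow> 'v \<Rightarrow> real \<times> real" where
  "pt \<alpha> \<beta> v = (\<alpha> v, \<beta> v)"

definition H_edge :: "('v \<Rightarrow> real) \<Rightarrow> ('v \<Rightarrow> real) \<Rightarrow> 'v \<times> 'v \<Rightarrow> bool" where
  "H_edge \<alpha> \<beta> e \<longleftrightarrow> \<beta> (fst e) = \<beta> (snd e) \<and> \<alpha> (fst e) < \<alpha> (snd e)"

definition V_edge :: "('v \<Rightarrow> real) \<Rightarrow> ('v \<Rightarrow> real) \<Rightarrow> 'v \<times> 'v \<Rightarrow> bool" where
  "V_edge \<alpha> \<beta> e \<longleftrightarrow> \<alpha> (fst e) = \<alpha> (snd e) \<and> \<beta> (snd e) < \<beta> (fst e)"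

definition dpath :: "'v set \<Rightarrow> ('v \<times> 'v) set \<Rightarrow> 'v list \<Rightarrow> bool" where
  "dpath V E xs \<longleftrightarrow> xs \<noteq> [] \<and> set xs \<subseteq> V \<and> (\<forall>i. Suc i < length xs \<longrightarrow> (xs ! i, xs ! Suc i) \<in> E)"

definition path_edges :: "'v list \<Rightarrow> ('v \<times> 'v) list" where
  "path_edges xs = zip xs (tl xs)"

definition hpath :: "'v set \<Rightarrow> ('v \<times> 'v) set \<Rightarrow> ('v \<Rightarrow> real) \<Rightarrow> ('v \<Rightarrow> real) \<Rightarrow> 'v \<Rightarrow> 'v \<Rightarrow> bool" where
  "hpath V E \<alpha> \<beta> u v \<longleftrightarrow> (\<exists>xs. dpath V E xs \<and> hd xs = u \<and> last xs = v \<and>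
       (\<forall>e\<in>set (path_edges xs). H_edge \<alpha> \<beta> e))"

definition vpath :: "'v set \<Rightarrow> ('v \<times> 'v) set \<Rightarrow> ('v \<Rightarrow> real) \<Rightarrow> ('v \<Rightarrow> real) \<Rightarrow> 'v \<Rightarrow> 'v \<Rightarrow> bool" where
  "vpath V E \<alpha> \<beta> u v \<longleftrightarrow> (\<exists>xs. dpath V E xs \<and> hd xs = u \<and> last xs = v \<and>
       (\<forall>e\<in>set (path_edges xs). V_edge \<alpha> \<beta> e))"

definition common_vpath :: "'v set \<Rightarrow> ('v \<times> 'v) set \<Rightarrow> ('v \<Rightarrow> real) \<Rightarrow> ('v \<Rightarrow> real) \<Rightarrow> 'v \<Rightarrow> 'v \<Rightarrow> bool" where
  "common_vpath V E \<alpha> \<beta> u v \<longleftrightarrow> (\<exists>xs. dpath V E xs \<and> u \<in> set xs \<and> v \<in> set xs \<and>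
       (\<forall>e\<in>set (path_edges xs). V_edge \<alpha> \<beta> e))"

definition common_hpath :: "'v set \<Rightarrow> ('v \<times> 'v) set \<Rightarrow> ('v \<Rightarrow> real) \<Rightarrow> ('v \<Rightarrow> real) \<Rightarrow> 'v \<Rightarrow> 'v \<Rightarrow> bool" where
  "common_hpath V E \<alpha> \<beta> u v \<longleftrightarrow> (\<exists>xs. dpath V E xs \<and> u \<in> set xs \<and> v \<in> set xs \<and>
       (\<forall>e\<in>set (path_edges xs). H_edge \<alpha> \<beta> e))"

definition inner :: "'v set \<Rightarrow> 'v list \<Rightarrow> 'v list \<Rightarrow> 'v set" where
  "inner V r c = V - set r - set c"

definition se_graph :: "'v set \<Rightarrow> ('v \<times> 'v) set \<Rightarrow> ('v \<Rightarrow> real) \<Rightarrow> ('v \<Rightarrow> real) \<Rightarrow> 'v list \<Rightarrow> 'v list \<Rightarrow> bool" where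
  "se_graph V E \<alpha> \<beta> r c \<longleftrightarrow>
     finite V \<and> E \<subseteq> V \<times> V \<and>
     (\<forall>e\<in>E. H_edge \<alpha> \<beta> e \<or> V_edge \<alpha> \<beta> e) \<and>
     \<comment> \<open>planar embedding with straight edges\<close>
     inj_on (pt \<alpha> \<beta>) V \<and>
     (\<forall>a b a' b'. (a, b) \<in> E \<longrightarrow> (a', b') \<in> E \<longrightarrow> (a, b) \<noteq> (a', b') \<longrightarrow>
        closed_segment (pt \<alpha> \<beta> a) (pt \<alpha> \<beta> b) \<inter> closed_segment (pt \<alpha> \<beta> a') (pt \<alpha> \<beta> b')
          \<subseteq> {pt \<alpha> \<beta> a, pt \<alpha> \<beta> b} \<inter> {pt \<alpha> \<beta> a', pt \<alpha> \<beta> b'}) \<and>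
     (\<forall>v\<in>V. \<forall>a b. (a, b) \<in> E \<longrightarrow> pt \<alpha> \<beta> v \<in> closed_segment (pt \<alpha> \<beta> a) (pt \<alpha> \<beta> b) \<longrightarrow> v = a \<or> v = b) \<and>
     \<comment> \<open>sources and sinks\<close>
     distinct r \<and> distinct c \<and> set r \<subseteq> V \<and> set c \<subseteq> V \<and> set r \<inter> set c = {} \<and>
     (\<forall>i<length r. \<alpha> (r ! i) = 0 \<and> 0 \<le> \<beta> (r ! i)) \<and>
     (\<forall>i j. i < j \<and> j < length r \<longrightarrow> \<beta> (r ! i) < \<beta> (r ! j)) \<and>
     (\<forall>j<length c. \<beta> (c ! j) = 0 \<and> 0 \<le> \<alpha> (c ! j)) \<and>
     (\<forall>i j. i < j \<and> j < length c \<longrightarrow> \<alpha> (c ! i) < \<alpha> (c ! j)) \<and>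
     (\<forall>s\<in>set r. \<forall>a b. (a, b) \<in> E \<longrightarrow> b \<noteq> s \<and> (a = s \<longrightarrow> H_edge \<alpha> \<beta> (a, b))) \<and>
     (\<forall>t\<in>set c. \<forall>a b. (a, b) \<in> E \<longrightarrow> a \<noteq> t \<and> (b = t \<longrightarrow> V_edge \<alpha> \<beta> (a, b))) \<and>
     \<comment> \<open>every vertex lies on a source-to-sink path\<close>
     (\<forall>v\<in>V. \<exists>xs. dpath V E xs \<and> hd xs \<in> set r \<and> last xs \<in> set c \<and> v \<in> set xs) \<and>
     \<comment> \<open>standing convention\<close>
     (\<forall>u\<in>V. \<forall>v\<in>V. (u \<in> inner V r c \<or> v \<in> inner V r c) \<longrightarrow>
        (\<alpha> u = \<alpha> v \<longleftrightarrow> common_vpath V E \<alpha> \<beta> u v) \<and>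
        (\<beta> u = \<beta> v \<longleftrightarrow> common_hpath V E \<alpha> \<beta> u v))"

section \<open>The quantum torus L_G via its universal property\<close>

text \<open>emb makes the ring 'a a K-algebra (K = 'k): a unital ring homomorphism into the centre.\<close>
definition scalar_embedding :: "('k::field \<Rightarrow> 'a::ring_1) \<Rightarrow> bool" where
  "scalar_embedding emb \<longleftrightarrow> emb 1 = 1 \<and> (\<forall>a b. emb (a + b) = emb a + emb b) \<and>
     (\<forall>a b. emb (a * b) = emb a * emb b) \<and> (\<forall>a y. emb a * y = y * emb a)"

definition LG_relations :: "'v set \<Rightarrow> ('v \<times> 'v) set \<Rightarrow> ('v \<Rightarrow> real) \<Rightarrow> ('v \<Rightarrow> real) \<Rightarrow> 'v set
    \<Rightarrow> 'a::ring_1 \<Rightarrow> ('v \<Rightarrow> 'a) \<Rightarrow> bool" where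
  "LG_relations V E \<alpha> \<beta> W q x \<longleftrightarrow>
     (\<forall>u\<in>W. \<forall>v\<in>W. u \<noteq> v \<longrightarrow>
        (hpath V E \<alpha> \<beta> u v \<longrightarrow> x u * x v = q * (x v * x u)) \<and>
        (vpath V E \<alpha> \<beta> u v \<longrightarrow> x v * x u = q * (x u * x v)) \<and>
        (\<not> hpath V E \<alpha> \<beta> u v \<and> \<not> hpath V E \<alpha> \<beta> v u \<and> \<not> vpath V E \<alpha> \<beta> u v \<and> \<not> vpath V E \<alpha> \<beta> v u
           \<longrightarrow> x u * x v = x v * x u))"

text \<open>Edge weights (xi w is the inverse of x w) and path weights (ordered products).\<close>
definition edge_wt :: "('v \<Rightarrow> real) \<Rightarrow> ('v \<Rightarrow> real) \<Rightarrow> 'v list \<Rightarrow> 'v set \<Rightarrow> ('v \<Rightarrow> 'a::ring_1)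
    \<Rightarrow> ('v \<Rightarrow> 'a) \<Rightarrow> 'v \<times> 'v \<Rightarrow> 'a" where
  "edge_wt \<alpha> \<beta> r W x xi e =
     (if fst e \<in> set r then x (snd e)
      else if H_edge \<alpha> \<beta> e \<and> fst e \<in> W \<and> snd e \<in> W then xi (fst e) * x (snd e)
      else 1)"

definition path_wt :: "('v \<Rightarrow> real) \<Rightarrow> ('v \<Rightarrow> real) \<Rightarrow> 'v list \<Rightarrow> 'v set \<Rightarrow> ('v \<Rightarrow> 'a::ring_1)
    \<Rightarrow> ('v \<Rightarrow> 'a) \<Rightarrow> 'v list \<Rightarrow> 'a" where
  "path_wt \<alpha> \<beta> r W x xi xs = prod_list (map (edge_wt \<alpha> \<beta> r W x xi) (path_edges xs))"

definition standard :: "('v \<Rightarrow> real) \<Rightarrow> ('v \<Rightarrow> real) \<Rightarrow> 'v list \<Rightarrow> bool" where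
  "standard \<alpha> \<beta> xs \<longleftrightarrow> (\<exists>e\<in>set (path_edges xs). H_edge \<alpha> \<beta> e)"

definition weakly_intersecting :: "'v list \<Rightarrow> 'v list \<Rightarrow> bool" where
  "weakly_intersecting P Q \<longleftrightarrow> set P \<inter> set Q = {hd P, last P} \<inter> {hd Q, last Q}"

end

theory Submission
  imports Defs
begin


definition kap :: "('k::field \<Rightarrow> 'a::ring_1) \<Rightarrow> 'k \<Rightarrow> int \<Rightarrow> 'a" where
  "kap emb q n = emb (q powi n)"

definition qcomm :: "('k::field \<Rightarrow> 'a::ring_1) \<Rightarrow> 'k \<Rightarrow> 'a \<Rightarrow> 'a \<Rightarrow> int \<Rightarrow> bool" where
  "qcomm emb q a b n \<longleftrightarrow> a * b = kap emb q n * (b * a)"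

lemma kap_add: "scalar_embedding emb \<Longrightarrow> q \<noteq> 0 \<Longrightarrow> kap emb q (m + n) = kap emb q m * kap emb q n"
proof -
  assume e: "scalar_embedding emb" "q \<noteq> 0"
  have 1: "q powi (m + n) = q powi m * q powi n" using e(2) by (simp add: power_int_add)
  have 2: "emb (a * b) = emb a * emb b" for a b using e(1) unfolding scalar_embedding_def by blast
  show ?thesis unfolding kap_def 1 2 ..
qed

lemma kap_0: "scalar_embedding emb \<Longrightarrow> kap emb q 0 = 1"
proof -
  assume "scalar_embedding emb"
  then have "emb 1 = 1" unfolding scalar_embedding_def by blast
  then show ?thesis by (simp add: kap_def)
qed

lemma kap_central: "scalar_embedding emb \<Longrightarrow> kap emb q n * y = y * kap emb q n"
  unfolding scalar_embedding_def kap_def by blast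

lemma qcomm_right:
  assumes e: "scalar_embedding emb" "q \<noteq> 0" and h: "qcomm emb q a b n" "qcomm emb q a b' m"
  shows "qcomm emb q a (b * b') (n + m)"
proof -
  have "a * (b * b') = (a * b) * b'" by (simp add: mult.assoc)
  also have "\<dots> = kap emb q n * (b * (a * b'))" using h by (simp add: qcomm_def mult.assoc)
  also have "\<dots> = kap emb q n * (b * (kap emb q m * (b' * a)))" using h by (simp add: qcomm_def)
  also have "\<dots> = kap emb q n * ((b * kap emb q m) * (b' * a))" by (simp add: mult.assoc)
  also have "\<dots> = kap emb q n * ((kap emb q m * b) * (b' * a))" using kap_central[OF e(1), of q m b] by simp
  also have "\<dots> = (kap emb q n * kap emb q m) * (b * b' * a)" by (simp add: mult.assoc)
  finally show ?thesis using kap_add[OF e] by (simp add: qcomm_def)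
qed

lemma qcomm_left:
  assumes e: "scalar_embedding emb" "q \<noteq> 0" and h: "qcomm emb q a b n" "qcomm emb q a' b m"
  shows "qcomm emb q (a * a') b (n + m)"
proof -
  have "(a * a') * b = a * (a' * b)" by (simp add: mult.assoc)
  also have "\<dots> = a * (kap emb q m * (b * a'))" using h by (simp add: qcomm_def)
  also have "\<dots> = (a * kap emb q m) * (b * a')" by (simp add: mult.assoc)
  also have "\<dots> = (kap emb q m * a) * (b * a')" using kap_central[OF e(1), of q m a] by simp
  also have "\<dots> = kap emb q m * ((a * b) * a')" by (simp add: mult.assoc)
  also have "\<dots> = kap emb q m * (kap emb q n * (b * a) * a')" using h by (simp add: qcomm_def mult.assoc)
  also have "\<dots> = (kap emb q n * kap emb q m) * (b * (a * a'))"
    using kap_central[OF e(1), of q m "kap emb q n"] by (metis mult.assoc)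
  finally show ?thesis using kap_add[OF e, of n m] by (simp add: qcomm_def)
qed

lemma qcomm_sym:
  assumes e: "scalar_embedding emb" "q \<noteq> 0" and h: "qcomm emb q a b n"
  shows "qcomm emb q b a (- n)"
proof -
  have "kap emb q (-n) * (a * b) = kap emb q (-n) * kap emb q n * (b * a)"
    using h by (simp add: qcomm_def mult.assoc)
  also have "\<dots> = b * a" using kap_add[OF e, of "-n" n] kap_0[OF e(1)] by simp
  finally show ?thesis by (simp add: qcomm_def)
qed

lemma qcomm_inv_left:
  assumes e: "scalar_embedding emb" "q \<noteq> 0" and h: "qcomm emb q a b n"
    and i: "a * a' = 1" "a' * a = 1"
  shows "qcomm emb q a' b (- n)"
proof -
  have "a' * (a * b) * a' = b * a'" using i by (simp add: mult.assoc[symmetric])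
  moreover have "a' * (a * b) * a' = kap emb q n * (a' * b)"
  proof -
    have "a' * (a * b) * a' = a' * (kap emb q n * (b * a)) * a'" using h by (simp add: qcomm_def)
    also have "\<dots> = (a' * kap emb q n) * (b * (a * a'))" by (simp add: mult.assoc)
    also have "\<dots> = kap emb q n * (a' * b)" using i kap_central[OF e(1), of q n a'] by (metis mult.assoc mult_1_right)
    finally show ?thesis .
  qed
  ultimately have "qcomm emb q b a' n" by (simp add: qcomm_def)
  from qcomm_sym[OF e this] show ?thesis .
qed

lemma qcomm_inv_right:
  assumes e: "scalar_embedding emb" "q \<noteq> 0" and h: "qcomm emb q a b n"
    and i: "b * b' = 1" "b' * b = 1"
  shows "qcomm emb q a b' (- n)"
  using qcomm_sym[OF e qcomm_inv_left[OF e qcomm_sym[OF e h] i]] by simp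

lemma qcomm_one_right: "scalar_embedding emb \<Longrightarrow> qcomm emb q a 1 0"
  by (simp add: qcomm_def kap_0)
lemma qcomm_one_left: "scalar_embedding emb \<Longrightarrow> qcomm emb q 1 b 0"
  by (simp add: qcomm_def kap_0)

definition gen :: "('v \<Rightarrow> 'a::ring_1) \<Rightarrow> ('v \<Rightarrow> 'a) \<Rightarrow> 'v \<times> bool \<Rightarrow> 'a" where
  "gen x xi a = (if snd a then x (fst a) else xi (fst a))"

definition sg :: "'v \<times> bool \<Rightarrow> int" where
  "sg a = (if snd a then 1 else -1)"

lemma qcomm_gen:
  assumes e: "scalar_embedding emb" "q \<noteq> 0" and h: "qcomm emb q (x (fst a)) (x (fst b)) n"
    and ia: "x (fst a) * xi (fst a) = 1" "xi (fst a) * x (fst a) = 1"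
    and ib: "x (fst b) * xi (fst b) = 1" "xi (fst b) * x (fst b) = 1"
  shows "qcomm emb q (gen x xi a) (gen x xi b) (sg a * sg b * n)"
proof -
  have h2: "qcomm emb q (xi (fst a)) (x (fst b)) (- n)" by (rule qcomm_inv_left[OF e h ia])
  have h3: "qcomm emb q (x (fst a)) (xi (fst b)) (- n)" by (rule qcomm_inv_right[OF e h ib])
  have h4: "qcomm emb q (xi (fst a)) (xi (fst b)) (- (- n))" by (rule qcomm_inv_right[OF e h2 ib])
  show ?thesis
  proof (cases "snd a"; cases "snd b")
    assume "snd a" "snd b" then show ?thesis using h by (simp add: gen_def sg_def)
  next
    assume "snd a" "\<not> snd b" then show ?thesis using h3 by (simp add: gen_def sg_def)
  next
    assume "\<not> snd a" "snd b" then show ?thesis using h2 by (simp add: gen_def sg_def)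
  next
    assume "\<not> snd a" "\<not> snd b" then show ?thesis using h4 by (simp add: gen_def sg_def)
  qed
qed

lemma qcomm_prod:
  assumes e: "scalar_embedding emb" "q \<noteq> 0"
    and h: "\<forall>a\<in>set L1. \<forall>b\<in>set L2. qcomm emb q (gen x xi a) (gen x xi b) (f a b)"
  shows "qcomm emb q (prod_list (map (gen x xi) L1)) (prod_list (map (gen x xi) L2))
           (sum_list (map (\<lambda>a. sum_list (map (f a) L2)) L1))"
  using h
proof (induction L1)
  case Nil
  then show ?case using qcomm_one_left[OF e(1)] by simp
next
  case (Cons a L1)
  have "qcomm emb q (gen x xi a) (prod_list (map (gen x xi) L2)) (sum_list (map (f a) L2))"
    using Cons.prems
  proof (induction L2)
    case Nil
    then show ?case using qcomm_one_right[OF e(1)] by simp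
  next
    case (Cons b L2)
    have 1: "qcomm emb q (gen x xi a) (gen x xi b) (f a b)" using Cons.prems by simp
    have 2: "qcomm emb q (gen x xi a) (prod_list (map (gen x xi) L2)) (sum_list (map (f a) L2))"
      using Cons.IH Cons.prems by simp
    show ?case using qcomm_right[OF e 1 2] by simp
  qed
  moreover have "qcomm emb q (prod_list (map (gen x xi) L1)) (prod_list (map (gen x xi) L2))
           (sum_list (map (\<lambda>a. sum_list (map (f a) L2)) L1))" using Cons by simp
  ultimately show ?case using qcomm_left[OF e] by (simp only: list.map prod_list.Cons sum_list.Cons)
qed

lemma prod_list_concat: "prod_list (map f (concat xss)) = prod_list (map (\<lambda>xs. prod_list (map f xs)) xss)"
  by (induction xss) auto

lemma sum_list_concat': "sum_list (map f (concat xss)) = sum_list (map (\<lambda>xs. sum_list (map f xs)) xss)"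
  by (induction xss) auto



lemma in_path_edges: "e \<in> set (path_edges xs) \<longleftrightarrow> (\<exists>k. Suc k < length xs \<and> e = (xs!k, xs!Suc k))"
  apply (auto simp: path_edges_def set_zip nth_tl)
  subgoal for i by (rule exI[of _ i]) simp
  done

lemma path_edges_Cons2: "path_edges (a # b # xs) = (a, b) # path_edges (b # xs)"
  by (simp add: path_edges_def)

lemma path_edges_single: "path_edges [a] = []"
  by (simp add: path_edges_def)

lemma telescope:
  "xs \<noteq> [] \<Longrightarrow> sum_list (map (\<lambda>e. g (snd e) - g (fst e)) (path_edges xs)) = (g (last xs) - g (hd xs) :: int)"
proof (induction xs)
  case Nil then show ?case by simp
next
  case (Cons a xs)
  show ?case
  proof (cases xs)
    case Nil then show ?thesis by (simp add: path_edges_single)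
  next
    case (Cons b ys)
    then show ?thesis using Cons.IH by (simp add: path_edges_Cons2)
  qed
qed

lemma chain_le:
  assumes "\<And>k. Suc k < n \<Longrightarrow> (f k :: real) \<le> f (Suc k)" "i \<le> j" "j < n"
  shows "f i \<le> f j"
  using assms(2,3)
proof (induction j)
  case 0 then show ?case by simp
next
  case (Suc j)
  show ?case
  proof (cases "i = Suc j")
    case True then show ?thesis by simp
  next
    case False
    then have "f i \<le> f j" using Suc by simp
    also have "f j \<le> f (Suc j)" using assms(1) Suc.prems by simp
    finally show ?thesis .
  qed
qed

lemma chain_less:
  assumes "\<And>k. Suc k < n \<Longrightarrow> (f k :: real) < f (Suc k)" "i < j" "j < n"
  shows "f i < f j"
  using assms(2,3)
proof (induction j)
  case 0 then show ?case by simp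
next
  case (Suc j)
  show ?case
  proof (cases "i = j")
    case True then show ?thesis using assms(1) Suc.prems by simp
  next
    case False
    then have "f i < f j" using Suc by simp
    also have "f j < f (Suc j)" using assms(1) Suc.prems by simp
    finally show ?thesis .
  qed
qed

lemma chain_eq:
  assumes "\<And>k. Suc k < n \<Longrightarrow> (f k :: real) = f (Suc k)" "j < n"
  shows "f 0 = f j"
  using assms(2) by (induction j) (use assms(1) in auto)

context
  fixes V E \<alpha> \<beta> r c
  assumes G: "se_graph V E \<alpha> \<beta> r c"
begin

lemma G_E: "(a, b) \<in> E \<Longrightarrow> a \<in> V \<and> b \<in> V"
proof -
  have "E \<subseteq> V \<times> V" using G unfolding se_graph_def by (elim conjE) assumption
  then show "(a, b) \<in> E \<Longrightarrow> a \<in> V \<and> b \<in> V" by blast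
qed

lemma G_HV: "e \<in> E \<Longrightarrow> H_edge \<alpha> \<beta> e \<or> V_edge \<alpha> \<beta> e"
proof -
  have "\<forall>e\<in>E. H_edge \<alpha> \<beta> e \<or> V_edge \<alpha> \<beta> e" using G unfolding se_graph_def by (elim conjE) assumption
  then show "e \<in> E \<Longrightarrow> H_edge \<alpha> \<beta> e \<or> V_edge \<alpha> \<beta> e" by blast
qed

lemma HV_excl: "H_edge \<alpha> \<beta> e \<Longrightarrow> \<not> V_edge \<alpha> \<beta> e"
  by (auto simp: H_edge_def V_edge_def)

lemma G_src: "(a, b) \<in> E \<Longrightarrow> b \<notin> set r \<and> (a \<in> set r \<longrightarrow> H_edge \<alpha> \<beta> (a, b))"
proof -
  have "\<forall>s\<in>set r. \<forall>a b. (a, b) \<in> E \<longrightarrow> b \<noteq> s \<and> (a = s \<longrightarrow> H_edge \<alpha> \<beta> (a, b))"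
    using G unfolding se_graph_def by (elim conjE) assumption
  then show "(a, b) \<in> E \<Longrightarrow> b \<notin> set r \<and> (a \<in> set r \<longrightarrow> H_edge \<alpha> \<beta> (a, b))" by blast
qed

lemma G_snk: "(a, b) \<in> E \<Longrightarrow> a \<notin> set c \<and> (b \<in> set c \<longrightarrow> V_edge \<alpha> \<beta> (a, b))"
proof -
  have "\<forall>t\<in>set c. \<forall>a b. (a, b) \<in> E \<longrightarrow> a \<noteq> t \<and> (b = t \<longrightarrow> V_edge \<alpha> \<beta> (a, b))"
    using G unfolding se_graph_def by (elim conjE) assumption
  then show "(a, b) \<in> E \<Longrightarrow> a \<notin> set c \<and> (b \<in> set c \<longrightarrow> V_edge \<alpha> \<beta> (a, b))" by blast
qed

lemma G_src_alpha: "s \<in> set r \<Longrightarrow> \<alpha> s = 0"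
proof -
  have "\<forall>i<length r. \<alpha> (r ! i) = 0 \<and> 0 \<le> \<beta> (r ! i)"
    using G unfolding se_graph_def by (elim conjE) assumption
  then show "s \<in> set r \<Longrightarrow> \<alpha> s = 0" by (auto simp: in_set_conv_nth)
qed

lemma G_inj: "u \<in> V \<Longrightarrow> v \<in> V \<Longrightarrow> \<alpha> u = \<alpha> v \<Longrightarrow> \<beta> u = \<beta> v \<Longrightarrow> u = v"
proof -
  have "inj_on (pt \<alpha> \<beta>) V" using G unfolding se_graph_def by (elim conjE) assumption
  then show "u \<in> V \<Longrightarrow> v \<in> V \<Longrightarrow> \<alpha> u = \<alpha> v \<Longrightarrow> \<beta> u = \<beta> v \<Longrightarrow> u = v"
    unfolding inj_on_def pt_def by auto
qed

lemma G_seg: "v \<in> V \<Longrightarrow> (a, b) \<in> E \<Longrightarrow> pt \<alpha> \<beta> v \<in> closed_segment (pt \<alpha> \<beta> a) (pt \<alpha> \<beta> b) \<Longrightarrow> v = a \<or> v = b"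
proof -
  have "\<forall>v\<in>V. \<forall>a b. (a, b) \<in> E \<longrightarrow> pt \<alpha> \<beta> v \<in> closed_segment (pt \<alpha> \<beta> a) (pt \<alpha> \<beta> b) \<longrightarrow> v = a \<or> v = b"
    using G unfolding se_graph_def by (elim conjE) assumption
  then show "v \<in> V \<Longrightarrow> (a, b) \<in> E \<Longrightarrow> pt \<alpha> \<beta> v \<in> closed_segment (pt \<alpha> \<beta> a) (pt \<alpha> \<beta> b) \<Longrightarrow> v = a \<or> v = b"
    by blast
qed

lemma G_conv: "u \<in> V \<Longrightarrow> v \<in> V \<Longrightarrow> u \<in> inner V r c \<or> v \<in> inner V r c \<Longrightarrow>
   (\<alpha> u = \<alpha> v \<longleftrightarrow> common_vpath V E \<alpha> \<beta> u v) \<and> (\<beta> u = \<beta> v \<longleftrightarrow> common_hpath V E \<alpha> \<beta> u v)"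
proof -
  have "\<forall>u\<in>V. \<forall>v\<in>V. (u \<in> inner V r c \<or> v \<in> inner V r c) \<longrightarrow>
        (\<alpha> u = \<alpha> v \<longleftrightarrow> common_vpath V E \<alpha> \<beta> u v) \<and>
        (\<beta> u = \<beta> v \<longleftrightarrow> common_hpath V E \<alpha> \<beta> u v)"
    using G unfolding se_graph_def by (elim conjE) assumption
  then show "u \<in> V \<Longrightarrow> v \<in> V \<Longrightarrow> u \<in> inner V r c \<or> v \<in> inner V r c \<Longrightarrow>
   (\<alpha> u = \<alpha> v \<longleftrightarrow> common_vpath V E \<alpha> \<beta> u v) \<and> (\<beta> u = \<beta> v \<longleftrightarrow> common_hpath V E \<alpha> \<beta> u v)"
    by blast
qed

lemma G_srcpath: "v \<in> V \<Longrightarrow> \<exists>xs. dpath V E xs \<and> hd xs \<in> set r \<and> last xs \<in> set c \<and> v \<in> set xs"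
proof -
  have "\<forall>v\<in>V. \<exists>xs. dpath V E xs \<and> hd xs \<in> set r \<and> last xs \<in> set c \<and> v \<in> set xs"
    using G unfolding se_graph_def by (elim conjE) assumption
  then show "v \<in> V \<Longrightarrow> \<exists>xs. dpath V E xs \<and> hd xs \<in> set r \<and> last xs \<in> set c \<and> v \<in> set xs" by blast
qed

lemma dpath_edge: "dpath V E xs \<Longrightarrow> e \<in> set (path_edges xs) \<Longrightarrow> e \<in> E"
  by (auto simp: dpath_def in_path_edges)

lemma dpath_step:
  assumes "dpath V E xs" "Suc k < length xs"
  shows "\<alpha> (xs!k) \<le> \<alpha> (xs!Suc k) \<and> \<beta> (xs!Suc k) \<le> \<beta> (xs!k)"
proof -
  have "(xs!k, xs!Suc k) \<in> E" using assms by (auto simp: dpath_def)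
  then show ?thesis using G_HV by (fastforce simp: H_edge_def V_edge_def)
qed

lemma dpath_alpha_mono:
  assumes "dpath V E xs" "i \<le> j" "j < length xs"
  shows "\<alpha> (xs!i) \<le> \<alpha> (xs!j)"
  using chain_le[of "length xs" "\<lambda>k. \<alpha> (xs!k)"] dpath_step[OF assms(1)] assms(2,3) by blast

lemma dpath_beta_mono:
  assumes "dpath V E xs" "i \<le> j" "j < length xs"
  shows "\<beta> (xs!j) \<le> \<beta> (xs!i)"
  using chain_le[of "length xs" "\<lambda>k. - \<beta> (xs!k)"] dpath_step[OF assms(1)] assms(2,3) by force

lemma alpha_nonneg: "v \<in> V \<Longrightarrow> 0 \<le> \<alpha> v"
proof -
  assume v: "v \<in> V"
  then obtain xs where xs: "dpath V E xs" "hd xs \<in> set r" "v \<in> set xs"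
    using G_srcpath by blast
  obtain j where j: "j < length xs" "xs!j = v" using xs(3) by (auto simp: in_set_conv_nth)
  have "xs \<noteq> []" using xs(1) by (simp add: dpath_def)
  then have "hd xs = xs!0" by (simp add: hd_conv_nth)
  then have "\<alpha> (xs!0) = 0" using G_src_alpha xs(2) by simp
  then show ?thesis using dpath_alpha_mono[OF xs(1), of 0 j] j by simp
qed

lemma hd_last_alpha:
  assumes "dpath V E xs" "standard \<alpha> \<beta> xs"
  shows "\<alpha> (hd xs) < \<alpha> (last xs)"
proof -
  obtain k where k: "Suc k < length xs" "H_edge \<alpha> \<beta> (xs!k, xs!Suc k)"
    using assms(2) by (auto simp: standard_def in_path_edges)
  have ne: "xs \<noteq> []" using k by auto
  have "\<alpha> (xs!0) \<le> \<alpha> (xs!k)" using dpath_alpha_mono[OF assms(1), of 0 k] k by simp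
  also have "\<dots> < \<alpha> (xs!Suc k)" using k by (simp add: H_edge_def)
  also have "\<dots> \<le> \<alpha> (xs!(length xs - 1))" using dpath_alpha_mono[OF assms(1), of "Suc k" "length xs - 1"] k by simp
  finally show ?thesis using ne by (simp add: hd_conv_nth last_conv_nth)
qed

lemma in_path_alpha:
  assumes "dpath V E xs" "v \<in> set xs"
  shows "\<alpha> (hd xs) \<le> \<alpha> v \<and> \<alpha> v \<le> \<alpha> (last xs) \<and> \<beta> (last xs) \<le> \<beta> v \<and> \<beta> v \<le> \<beta> (hd xs)"
proof -
  obtain j where j: "j < length xs" "xs!j = v" using assms(2) by (auto simp: in_set_conv_nth)
  have ne: "xs \<noteq> []" using j by auto
  show ?thesis
    using dpath_alpha_mono[OF assms(1), of 0 j] dpath_alpha_mono[OF assms(1), of j "length xs - 1"]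
      dpath_beta_mono[OF assms(1), of 0 j] dpath_beta_mono[OF assms(1), of j "length xs - 1"] j ne
    by (simp add: hd_conv_nth last_conv_nth)
qed

end


lemma edge_in: "Suc k < length xs \<Longrightarrow> (xs!k, xs!Suc k) \<in> set (path_edges xs)"
  by (auto simp: in_path_edges)

lemma sub_path:
  assumes d: "dpath V E xs" and ij: "i \<le> j" "j < length xs"
  shows "dpath V E (take (Suc j - i) (drop i xs)) \<and> hd (take (Suc j - i) (drop i xs)) = xs!i
    \<and> last (take (Suc j - i) (drop i xs)) = xs!j \<and> set (take (Suc j - i) (drop i xs)) \<subseteq> set xs
    \<and> set (path_edges (take (Suc j - i) (drop i xs))) \<subseteq> set (path_edges xs)"
proof -
  define ys where "ys = take (Suc j - i) (drop i xs)"
  have len: "length ys = Suc j - i" using ij by (simp add: ys_def)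
  have nth: "ys!k = xs!(i+k)" if "k < Suc j - i" for k using that ij by (simp add: ys_def)
  have ne: "ys \<noteq> []" using len ij by auto
  have sub: "set ys \<subseteq> set xs" unfolding ys_def
    by (meson order_trans set_drop_subset set_take_subset)
  have edges: "set (path_edges ys) \<subseteq> set (path_edges xs)"
  proof
    fix e assume "e \<in> set (path_edges ys)"
    then obtain k where k: "Suc k < length ys" "e = (ys!k, ys!Suc k)" by (auto simp: in_path_edges)
    then have "e = (xs!(i+k), xs!Suc (i+k))" using nth len by simp
    moreover have "Suc (i+k) < length xs" using k len ij by simp
    ultimately show "e \<in> set (path_edges xs)" by (auto simp: in_path_edges)
  qed
  have "dpath V E ys"
    unfolding dpath_def
  proof (intro conjI allI impI)
    show "ys \<noteq> []" by (rule ne)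
    show "set ys \<subseteq> V" using sub d by (auto simp: dpath_def)
    fix k assume "Suc k < length ys"
    then have "(ys!k, ys!Suc k) \<in> set (path_edges ys)" by (auto simp: in_path_edges)
    then have "(ys!k, ys!Suc k) \<in> set (path_edges xs)" using edges by blast
    then show "(ys!k, ys!Suc k) \<in> E" using d by (auto simp: dpath_def in_path_edges)
  qed
  moreover have "hd ys = xs!i" using ne nth[of 0] len ij by (simp add: hd_conv_nth)
  moreover have "last ys = xs!j" using ne nth[of "j - i"] len ij by (simp add: last_conv_nth)
  ultimately show ?thesis using sub edges unfolding ys_def by blast
qed

lemma cover:
  "ys \<noteq> [] \<Longrightarrow> \<beta> (last ys) \<le> (y::real) \<Longrightarrow> y \<le> \<beta> (hd ys) \<Longrightarrow>
   (\<exists>w\<in>set ys. \<beta> w = y) \<or> (\<exists>e\<in>set (path_edges ys). \<beta> (snd e) < y \<and> y < \<beta> (fst e))"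
proof (induction ys)
  case Nil then show ?case by simp
next
  case (Cons a ys)
  show ?case
  proof (cases ys)
    case Nil then show ?thesis using Cons.prems by auto
  next
    case (Cons b zs)
    show ?thesis
    proof (cases "\<beta> b \<le> y")
      case True
      then show ?thesis using Cons.prems \<open>ys = b # zs\<close>
        by (cases "y = \<beta> b"; cases "y = \<beta> a") (auto simp: path_edges_Cons2)
    next
      case False
      then have "(\<exists>w\<in>set ys. \<beta> w = y) \<or> (\<exists>e\<in>set (path_edges ys). \<beta> (snd e) < y \<and> y < \<beta> (fst e))"
        using Cons.IH Cons.prems \<open>ys = b # zs\<close> by simp
      then show ?thesis using \<open>ys = b # zs\<close> by (auto simp: path_edges_Cons2)
    qed
  qed
qed

lemma seg_vert:
  fixes ba bb y :: real
  assumes "bb < y" "y < ba"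
  shows "(A::real, y) \<in> closed_segment (A, ba) (A, bb)"
proof -
  define u where "u = (ba - y) / (ba - bb)"
  have u: "0 \<le> u" "u \<le> 1" using assms by (auto simp: u_def field_simps)
  have "u * (ba - bb) = ba - y" using assms by (simp add: u_def)
  moreover have "(1 - u) * ba + u * bb = ba - u * (ba - bb)" by (simp add: algebra_simps)
  ultimately have "(1 - u) * ba + u * bb = y" by simp
  then have "(A, y) = (1 - u) *\<^sub>R (A, ba) + u *\<^sub>R (A, bb)" by (simp add: algebra_simps)
  then show ?thesis unfolding closed_segment_def using u by blast
qed

lemma hpath_coords:
  assumes "hpath V E \<alpha> \<beta> u v" shows "\<beta> u = \<beta> v"
proof -
  obtain xs where xs: "dpath V E xs" "hd xs = u" "last xs = v" "\<forall>e\<in>set (path_edges xs). H_edge \<alpha> \<beta> e"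
    using assms by (auto simp: hpath_def)
  have ne: "xs \<noteq> []" using xs by (simp add: dpath_def)
  have "\<And>k. Suc k < length xs \<Longrightarrow> \<beta> (xs!k) = \<beta> (xs!Suc k)"
    proof -
    fix k assume "Suc k < length xs"
    from xs(4) edge_in[OF this] show "\<beta> (xs!k) = \<beta> (xs!Suc k)" by (auto simp: H_edge_def)
  qed
  then have "\<beta> (xs!0) = \<beta> (xs!(length xs - 1))"
    using chain_eq[of "length xs" "\<lambda>k. \<beta> (xs!k)"] ne by simp
  then show ?thesis using xs ne by (simp add: hd_conv_nth last_conv_nth)
qed

lemma vpath_coords:
  assumes "vpath V E \<alpha> \<beta> u v" shows "\<alpha> u = \<alpha> v"
proof -
  obtain xs where xs: "dpath V E xs" "hd xs = u" "last xs = v" "\<forall>e\<in>set (path_edges xs). V_edge \<alpha> \<beta> e"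
    using assms by (auto simp: vpath_def)
  have ne: "xs \<noteq> []" using xs by (simp add: dpath_def)
  have "\<And>k. Suc k < length xs \<Longrightarrow> \<alpha> (xs!k) = \<alpha> (xs!Suc k)"
    proof -
    fix k assume "Suc k < length xs"
    from xs(4) edge_in[OF this] show "\<alpha> (xs!k) = \<alpha> (xs!Suc k)" by (auto simp: V_edge_def)
  qed
  then have "\<alpha> (xs!0) = \<alpha> (xs!(length xs - 1))"
    using chain_eq[of "length xs" "\<lambda>k. \<alpha> (xs!k)"] ne by simp
  then show ?thesis using xs ne by (simp add: hd_conv_nth last_conv_nth)
qed

lemma common_to_vpath:
  assumes "common_vpath V E \<alpha> \<beta> u v" "\<beta> v < \<beta> u"
  shows "vpath V E \<alpha> \<beta> u v"
proof -
  obtain xs where xs: "dpath V E xs" "u \<in> set xs" "v \<in> set xs" "\<forall>e\<in>set (path_edges xs). V_edge \<alpha> \<beta> e"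
    using assms by (auto simp: common_vpath_def)
  obtain i where i: "i < length xs" "xs!i = u" using xs(2) by (auto simp: in_set_conv_nth)
  obtain j where j: "j < length xs" "xs!j = v" using xs(3) by (auto simp: in_set_conv_nth)
  have st: "\<And>k. Suc k < length xs \<Longrightarrow> - \<beta> (xs!k) < - \<beta> (xs!Suc k)"
    proof -
    fix k assume "Suc k < length xs"
    from xs(4) edge_in[OF this] show "- \<beta> (xs!k) < - \<beta> (xs!Suc k)" by (auto simp: V_edge_def)
  qed
  have "i < j"
  proof (rule ccontr)
    assume "\<not> i < j"
    then have "j = i \<or> j < i" by auto
    then show False
    proof
      assume "j = i" then show False using i j assms(2) by simp
    next
      assume "j < i"
      then have "- \<beta> (xs!j) < - \<beta> (xs!i)" using chain_less[of "length xs" "\<lambda>k. - \<beta> (xs!k)", OF st] i by blast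
      then show False using i j assms(2) by simp
    qed
  qed
  note sp = sub_path[OF xs(1), of i j] 
  show ?thesis unfolding vpath_def
    using sp \<open>i < j\<close> j i xs(4) by (intro exI[of _ "take (Suc j - i) (drop i xs)"]) auto
qed

lemma common_to_hpath:
  assumes "common_hpath V E \<alpha> \<beta> u v" "\<alpha> u < \<alpha> v"
  shows "hpath V E \<alpha> \<beta> u v"
proof -
  obtain xs where xs: "dpath V E xs" "u \<in> set xs" "v \<in> set xs" "\<forall>e\<in>set (path_edges xs). H_edge \<alpha> \<beta> e"
    using assms by (auto simp: common_hpath_def)
  obtain i where i: "i < length xs" "xs!i = u" using xs(2) by (auto simp: in_set_conv_nth)
  obtain j where j: "j < length xs" "xs!j = v" using xs(3) by (auto simp: in_set_conv_nth)
  have st: "\<And>k. Suc k < length xs \<Longrightarrow> \<alpha> (xs!k) < \<alpha> (xs!Suc k)"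
    proof -
    fix k assume "Suc k < length xs"
    from xs(4) edge_in[OF this] show "\<alpha> (xs!k) < \<alpha> (xs!Suc k)" by (auto simp: H_edge_def)
  qed
  have "i < j"
  proof (rule ccontr)
    assume "\<not> i < j"
    then have "j = i \<or> j < i" by auto
    then show False
    proof
      assume "j = i" then show False using i j assms(2) by simp
    next
      assume "j < i"
      then have "\<alpha> (xs!j) < \<alpha> (xs!i)" using chain_less[of "length xs" "\<lambda>k. \<alpha> (xs!k)", OF st] i by blast
      then show False using i j assms(2) by simp
    qed
  qed
  note sp = sub_path[OF xs(1), of i j] 
  show ?thesis unfolding hpath_def
    using sp \<open>i < j\<close> j i xs(4) by (intro exI[of _ "take (Suc j - i) (drop i xs)"]) auto
qed

definition ell :: "('v \<Rightarrow> real) \<Rightarrow> ('v \<Rightarrow> real) \<Rightarrow> 'v list \<Rightarrow> 'v set \<Rightarrow> 'v \<times> 'v \<Rightarrow> ('v \<times> bool) list" where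
  "ell \<alpha> \<beta> r W e = (if fst e \<in> set r then [(snd e, True)]
      else if H_edge \<alpha> \<beta> e \<and> fst e \<in> W \<and> snd e \<in> W then [(fst e, False), (snd e, True)] else [])"

lemma edge_wt_ell: "edge_wt \<alpha> \<beta> r W x xi e = prod_list (map (gen x xi) (ell \<alpha> \<beta> r W e))"
  by (simp add: edge_wt_def ell_def gen_def)

lemma path_wt_ell: "path_wt \<alpha> \<beta> r W x xi xs = prod_list (map (gen x xi) (concat (map (ell \<alpha> \<beta> r W) (path_edges xs))))"
proof -
  have "edge_wt \<alpha> \<beta> r W x xi = (\<lambda>e. prod_list (map (gen x xi) (ell \<alpha> \<beta> r W e)))"
    by (rule ext) (rule edge_wt_ell)
  then show ?thesis unfolding path_wt_def prod_list_concat map_map by (simp add: comp_def)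
qed

context
  fixes V E \<alpha> \<beta> r c
  assumes G: "se_graph V E \<alpha> \<beta> r c"
begin

lemma on_vline:
  assumes ys: "dpath V E ys" "\<forall>w\<in>set ys. \<alpha> w = A" and p: "p \<in> V" "\<alpha> p = A"
    and b: "\<beta> (last ys) \<le> \<beta> p" "\<beta> p \<le> \<beta> (hd ys)"
  shows "p \<in> set ys"
proof -
  have ne: "ys \<noteq> []" using ys by (simp add: dpath_def)
  from cover[OF ne b] show ?thesis
  proof
    assume "\<exists>w\<in>set ys. \<beta> w = \<beta> p"
    then obtain w where w: "w \<in> set ys" "\<beta> w = \<beta> p" by blast
    have "w \<in> V" using w ys by (auto simp: dpath_def)
    then have "p = w" using G_inj[OF G p(1)] w ys p by auto
    then show ?thesis using w by simp
  next
    assume "\<exists>e\<in>set (path_edges ys). \<beta> (snd e) < \<beta> p \<and> \<beta> p < \<beta> (fst e)"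
    then obtain a b where e: "(a, b) \<in> set (path_edges ys)" "\<beta> b < \<beta> p" "\<beta> p < \<beta> a" by auto
    obtain k where k: "Suc k < length ys" "a = ys!k" "b = ys!Suc k" using e(1) unfolding in_path_edges by auto
    have ab: "a \<in> set ys" "b \<in> set ys" using k by auto
    have E: "(a, b) \<in> E" using dpath_edge[OF G ys(1) e(1)] .
    have "pt \<alpha> \<beta> p \<in> closed_segment (pt \<alpha> \<beta> a) (pt \<alpha> \<beta> b)"
      using seg_vert[OF e(2) e(3), of A] ab ys(2) p(2) by (simp add: pt_def)
    then have "p = a \<or> p = b" using G_seg[OF G p(1) E] by blast
    then show ?thesis using ab by blast
  qed
qed

lemma ell_mem:
  assumes e: "(u, v) \<in> E" and a: "a \<in> set (ell \<alpha> \<beta> r (inner V r c) (u, v))"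
  shows "fst a \<in> inner V r c \<and> (fst a = u \<or> fst a = v)"
proof (cases "u \<in> set r")
  case True
  then have a: "a = (v, True)" using a by (simp add: ell_def)
  have "v \<in> V" "v \<notin> set r" "H_edge \<alpha> \<beta> (u, v)" using G_E[OF G e] G_src[OF G e] True by auto
  moreover have "v \<notin> set c" using G_snk[OF G e] HV_excl[OF G] \<open>H_edge \<alpha> \<beta> (u, v)\<close> by blast
  ultimately show ?thesis using a by (simp add: inner_def)
next
  case False
  then show ?thesis using a by (auto simp: ell_def split: if_splits)
qed

lemma ell_sum:
  assumes e: "(u, v) \<in> E"
  shows "sum_list (map (\<lambda>a. sg a * g (fst a)) (ell \<alpha> \<beta> r (inner V r c) (u, v))) =
    (if u \<in> set r then g v else if H_edge \<alpha> \<beta> (u, v) then g v - g u else (0::int))"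
proof (cases "u \<in> set r")
  case True then show ?thesis by (simp add: ell_def sg_def)
next
  case False
  show ?thesis
  proof (cases "H_edge \<alpha> \<beta> (u, v)")
    case True
    have "u \<in> inner V r c" using G_E[OF G e] G_snk[OF G e] False by (simp add: inner_def)
    moreover have "v \<in> inner V r c" using G_E[OF G e] G_src[OF G e] G_snk[OF G e] HV_excl[OF G] True
      by (auto simp: inner_def)
    ultimately show ?thesis using False True by (simp add: ell_def sg_def)
  next
    case F: False
    then show ?thesis using False by (simp add: ell_def)
  qed
qed

end


context
  fixes V E \<alpha> \<beta> r c
  assumes G: "se_graph V E \<alpha> \<beta> r c"
begin

lemma path_sum:
  assumes d: "dpath V E xs"
    and hyp: "\<And>e. e \<in> set (path_edges xs) \<Longrightarrow>
      (if fst e \<in> set r then g (snd e) else if H_edge \<alpha> \<beta> e then g (snd e) - g (fst e) else (0::int)) = f e"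
  shows "sum_list (map (\<lambda>a. sg a * g (fst a)) (concat (map (ell \<alpha> \<beta> r (inner V r c)) (path_edges xs))))
     = sum_list (map f (path_edges xs))"
proof -
  have "map (\<lambda>es. sum_list (map (\<lambda>a. sg a * g (fst a)) es)) (map (ell \<alpha> \<beta> r (inner V r c)) (path_edges xs))
      = map f (path_edges xs)"
    unfolding map_map
  proof (rule map_cong[OF refl])
    fix e assume e: "e \<in> set (path_edges xs)"
    obtain u v where uv: "e = (u, v)" by (cases e)
    have eE: "(u, v) \<in> E" using dpath_edge[OF G d e] uv by simp
    have h2: "(if u \<in> set r then g v else if H_edge \<alpha> \<beta> (u, v) then g v - g u else 0) = f (u, v)"
      using hyp[OF e] unfolding uv fst_conv snd_conv .
    have "sum_list (map (\<lambda>a. sg a * g (fst a)) (ell \<alpha> \<beta> r (inner V r c) (u, v))) = f (u, v)"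
      using ell_sum[OF G eE, of g] h2 by (rule trans)
    then show "((\<lambda>es. sum_list (map (\<lambda>a. sg a * g (fst a)) es)) \<circ> ell \<alpha> \<beta> r (inner V r c)) e = f e"
      unfolding uv comp_def .
  qed
  then show ?thesis unfolding sum_list_concat' by (rule arg_cong[where f=sum_list])
qed

lemma memL:
  assumes d: "dpath V E xs" and a: "a \<in> set (concat (map (ell \<alpha> \<beta> r (inner V r c)) (path_edges xs)))"
  shows "fst a \<in> inner V r c \<and> fst a \<in> set xs"
proof -
  obtain e where e: "e \<in> set (path_edges xs)" "a \<in> set (ell \<alpha> \<beta> r (inner V r c) e)" using a by auto
  have eE: "(fst e, snd e) \<in> E" using dpath_edge[OF G d e(1)] by simp
  obtain k where k: "Suc k < length xs" "e = (xs!k, xs!Suc k)" using e(1) by (auto simp: in_path_edges)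
  have "fst e \<in> set xs" "snd e \<in> set xs" using k by auto
  then show ?thesis using ell_mem[OF G eE, of a] e(2) by auto
qed

end

lemma sum_neg: "sum_list (map (\<lambda>a. - f a) xs) = - sum_list (map f xs :: int list)"
  by (induction xs) auto

theorem lemmaA5:
  fixes V :: "'v set" and E :: "('v \<times> 'v) set" and \<alpha> \<beta> :: "'v \<Rightarrow> real"
    and r c :: "'v list"
    and emb :: "'k::field \<Rightarrow> 'a::ring_1" and q :: 'k and x xi :: "'v \<Rightarrow> 'a"
    and P Q :: "'v list"
  assumes G: "se_graph V E \<alpha> \<beta> r c"
    and q: "q \<noteq> 0"
    and alg: "scalar_embedding emb"
    and inv: "\<forall>w\<in>inner V r c. x w * xi w = 1 \<and> xi w * x w = 1"
    and rel: "LG_relations V E \<alpha> \<beta> (inner V r c) (emb q) x"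
    and P: "dpath V E P" "standard \<alpha> \<beta> P"
    and Q: "dpath V E Q" "standard \<alpha> \<beta> Q"
    and PQ: "weakly_intersecting P Q"
    and a: "\<alpha> (last P) = \<alpha> (hd Q)"
    and b: "\<beta> (last P) < \<beta> (hd Q)"
  shows "path_wt \<alpha> \<beta> r (inner V r c) x xi P * path_wt \<alpha> \<beta> r (inner V r c) x xi Q
         = emb (inverse q) * (path_wt \<alpha> \<beta> r (inner V r c) x xi Q * path_wt \<alpha> \<beta> r (inner V r c) x xi P)"
proof -
  define W where "W = inner V r c"
  define LP where "LP = concat (map (ell \<alpha> \<beta> r W) (path_edges P))"
  define LQ where "LQ = concat (map (ell \<alpha> \<beta> r W) (path_edges Q))"
  define A where "A = \<alpha> (last P)"
  have wP: "path_wt \<alpha> \<beta> r W x xi P = prod_list (map (gen x xi) LP)" by (simp add: path_wt_ell LP_def)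
  have wQ: "path_wt \<alpha> \<beta> r W x xi Q = prod_list (map (gen x xi) LQ)" by (simp add: path_wt_ell LQ_def)
  have Pne: "P \<noteq> []" and Qne: "Q \<noteq> []" using P Q by (auto simp: dpath_def)
  have PV: "set P \<subseteq> V" and QV: "set Q \<subseteq> V" using P Q by (auto simp: dpath_def)
  have lA: "\<alpha> (last P) = A" unfolding A_def ..
  have hP: "\<alpha> (hd P) < A" using hd_last_alpha[OF G P] lA by simp
  have aQ: "\<alpha> (hd Q) = A" using a lA by simp
  have hQ: "A < \<alpha> (last Q)" using hd_last_alpha[OF G Q] aQ by simp
  have "hd P \<in> V" using PV Pne by auto
  then have Apos: "0 < A" using alpha_nonneg[OF G] hP by force
  have hQr: "hd Q \<notin> set r" using G_src_alpha[OF G] aQ Apos by force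
  have disj: "set P \<inter> set Q = {}"
  proof -
    have "hd P \<noteq> hd Q" using hP aQ by auto
    moreover have "hd P \<noteq> last Q" using hP hQ by auto
    moreover have "last P \<noteq> hd Q" using b by auto
    moreover have "last P \<noteq> last Q" using lA hQ by auto
    ultimately
    show ?thesis using PQ unfolding weakly_intersecting_def by auto
  qed
  have Pb: "\<And>z. z \<in> set P \<Longrightarrow> \<alpha> z \<le> A" using in_path_alpha[OF G P(1)] lA by metis
  have Qb: "\<And>z. z \<in> set Q \<Longrightarrow> A \<le> \<alpha> z" using in_path_alpha[OF G Q(1)] aQ by force
  have geo: "\<beta> z < \<beta> z'" if z: "z \<in> set P" and z': "z' \<in> set Q" and eq: "\<alpha> z = \<alpha> z'" for z z'
  proof (rule ccontr)
    assume "\<not> \<beta> z < \<beta> z'"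
    then have le: "\<beta> z' \<le> \<beta> z" by simp
    have zA: "\<alpha> z = A" "\<alpha> z' = A" using Pb[OF z] Qb[OF z'] eq by auto
    obtain i where i: "i < length P" "P!i = z" using z by (auto simp: in_set_conv_nth)
    obtain j where j: "j < length Q" "Q!j = z'" using z' by (auto simp: in_set_conv_nth)
    define S where "S = take (Suc (length P - 1) - i) (drop i P)"
    define T where "T = take (Suc j - 0) (drop 0 Q)"
    have S: "dpath V E S" "hd S = z" "last S = last P" "set S \<subseteq> set P"
      using sub_path[OF P(1), of i "length P - 1"] i Pne unfolding S_def by (auto simp: last_conv_nth)
    have T: "dpath V E T" "hd T = hd Q" "last T = z'" "set T \<subseteq> set Q"
      using sub_path[OF Q(1), of 0 j] j Qne unfolding T_def by (auto simp: hd_conv_nth)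
    have SA: "\<forall>w\<in>set S. \<alpha> w = A"
    proof
      fix w assume w: "w \<in> set S"
      show "\<alpha> w = A" using Pb[of w] w S in_path_alpha[OF G S(1) w] zA by force
    qed
    have TA: "\<forall>w\<in>set T. \<alpha> w = A"
    proof
      fix w assume w: "w \<in> set T"
      show "\<alpha> w = A" using Qb[of w] w T in_path_alpha[OF G T(1) w] zA by force
    qed
    show False
    proof (cases "\<beta> (last P) \<le> \<beta> z'")
      case True
      have "z' \<in> V" using z' QV by auto
      then have "z' \<in> set S" using on_vline[OF G S(1) SA _ zA(2)] True le S by simp
      then show False using S(4) z' disj by auto
    next
      case False
      have "last P \<in> V" using PV Pne by auto
      moreover have "\<alpha> (last P) = A" by (rule lA)
      ultimately have "last P \<in> set T" using on_vline[OF G T(1) TA] False b T by simp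
      then show False using T(4) last_in_set[OF Pne] disj by auto
    qed
  qed
  have Qns: "fst e \<notin> set r" if e: "e \<in> set (path_edges Q)" for e
  proof -
    obtain k where k: "Suc k < length Q" "e = (Q!k, Q!Suc k)" using e by (auto simp: in_path_edges)
    show ?thesis
    proof (cases k)
      case 0 then show ?thesis using k hQr Qne by (simp add: hd_conv_nth)
    next
      case (Suc m)
      have "(Q!m, Q!Suc m) \<in> E" using dpath_edge[OF G Q(1) edge_in[of m Q]] k Suc by simp
      then show ?thesis using G_src[OF G] k Suc by auto
    qed
  qed
  have Pcol: "sum_list (map (\<lambda>a. sg a * (if \<alpha> (fst a) = A then 1 else 0)) LP) = 1"
  proof -
    let ?g = "\<lambda>z. if \<alpha> z = A then 1 else (0::int)"
    have "sum_list (map (\<lambda>a. sg a * ?g (fst a)) LP) = sum_list (map (\<lambda>e. ?g (snd e) - ?g (fst e)) (path_edges P))"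
      unfolding LP_def W_def
    proof (rule path_sum[OF G P(1)])
      fix e assume e: "e \<in> set (path_edges P)"
      have eE: "e \<in> E" using dpath_edge[OF G P(1) e] .
      show "(if fst e \<in> set r then ?g (snd e) else if H_edge \<alpha> \<beta> e then ?g (snd e) - ?g (fst e) else 0)
          = ?g (snd e) - ?g (fst e)"
        using G_src_alpha[OF G, of "fst e"] Apos G_HV[OF G eE] by (auto simp: V_edge_def)
    qed
    also have "\<dots> = ?g (last P) - ?g (hd P)" using telescope[OF Pne] .
    also have "\<dots> = 1" using hP lA by simp
    finally show ?thesis .
  qed
  have Qcol: "sum_list (map (\<lambda>b. sg b * (if \<alpha> (fst b) = t then 1 else 0)) LQ) = (if t = A then -1 else 0)"
    if t: "t \<le> A" for t
  proof -
    let ?g = "\<lambda>z. if \<alpha> z = t then 1 else (0::int)"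
    have "sum_list (map (\<lambda>a. sg a * ?g (fst a)) LQ) = sum_list (map (\<lambda>e. ?g (snd e) - ?g (fst e)) (path_edges Q))"
      unfolding LQ_def W_def
    proof (rule path_sum[OF G Q(1)])
      fix e assume e: "e \<in> set (path_edges Q)"
      have eE: "e \<in> E" using dpath_edge[OF G Q(1) e] .
      show "(if fst e \<in> set r then ?g (snd e) else if H_edge \<alpha> \<beta> e then ?g (snd e) - ?g (fst e) else 0)
          = ?g (snd e) - ?g (fst e)"
        using Qns[OF e] G_HV[OF G eE] by (auto simp: V_edge_def)
    qed
    also have "\<dots> = ?g (last Q) - ?g (hd Q)" using telescope[OF Qne] .
    also have "\<dots> = (if t = A then -1 else 0)" using hQ t aQ by auto
    finally show ?thesis .
  qed
  have Qrow: "sum_list (map (\<lambda>b. sg b * (if \<beta> (fst b) = y then 1 else 0)) LQ) = 0" for y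
  proof -
    let ?g = "\<lambda>z. if \<beta> z = y then 1 else (0::int)"
    have "sum_list (map (\<lambda>a. sg a * ?g (fst a)) LQ) = sum_list (map (\<lambda>e. 0) (path_edges Q))"
      unfolding LQ_def W_def
    proof (rule path_sum[OF G Q(1)])
      fix e assume e: "e \<in> set (path_edges Q)"
      show "(if fst e \<in> set r then ?g (snd e) else if H_edge \<alpha> \<beta> e then ?g (snd e) - ?g (fst e) else 0) = 0"
        using Qns[OF e] by (auto simp: H_edge_def)
    qed
    then show ?thesis by simp
  qed
  define eps :: "'v \<times> bool \<Rightarrow> 'v \<times> bool \<Rightarrow> int" where "eps = (\<lambda>a b. (if \<alpha> (fst b) = \<alpha> (fst a) then 1 else 0) + (if \<beta> (fst b) = \<beta> (fst a) then 1 else (0::int)))"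
  have relD: "\<forall>u\<in>W. \<forall>v\<in>W. u \<noteq> v \<longrightarrow>
        (hpath V E \<alpha> \<beta> u v \<longrightarrow> x u * x v = emb q * (x v * x u)) \<and>
        (vpath V E \<alpha> \<beta> u v \<longrightarrow> x v * x u = emb q * (x u * x v)) \<and>
        (\<not> hpath V E \<alpha> \<beta> u v \<and> \<not> hpath V E \<alpha> \<beta> v u \<and> \<not> vpath V E \<alpha> \<beta> u v \<and> \<not> vpath V E \<alpha> \<beta> v u
           \<longrightarrow> x u * x v = x v * x u)"
    using rel unfolding LG_relations_def W_def .
  have k1: "kap emb q 1 = emb q" by (simp add: kap_def)
  have k0: "kap emb q 0 = 1" using kap_0[OF alg] .
  have pair: "qcomm emb q (gen x xi a) (gen x xi b) (sg a * sg b * eps a b)"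
    if aL: "a \<in> set LP" and bL: "b \<in> set LQ" for a b
  proof -
    obtain z z' where zz: "z = fst a" "z' = fst b" by blast
    have z: "z \<in> W" "z \<in> set P" using memL[OF G P(1), of a] aL zz unfolding LP_def W_def by auto
    have z': "z' \<in> W" "z' \<in> set Q" using memL[OF G Q(1), of b] bL zz unfolding LQ_def W_def by auto
    have zV: "z \<in> V" "z' \<in> V" using z z' PV QV by auto
    have ne: "z \<noteq> z'" using z z' disj by auto
    have cm: "qcomm emb q (x z) (x z') (eps a b)"
    proof (cases "\<alpha> z = \<alpha> z'")
      case True
      have bl: "\<beta> z < \<beta> z'" using geo[OF z(2) z'(2) True] .
      have "common_vpath V E \<alpha> \<beta> z' z" using G_conv[OF G zV(2) zV(1)] z' True unfolding W_def by auto
      then have "vpath V E \<alpha> \<beta> z' z" using common_to_vpath[of V E \<alpha> \<beta> z' z] bl by blast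
      then have "x z * x z' = emb q * (x z' * x z)" using relD[rule_format, OF z'(1) z(1) ne[symmetric]] by blast
      moreover have "eps a b = 1" using True bl zz unfolding eps_def by auto
      ultimately show ?thesis using k1 by (simp add: qcomm_def)
    next
      case F: False
      show ?thesis
      proof (cases "\<beta> z = \<beta> z'")
        case True
        have al: "\<alpha> z < \<alpha> z'" using Pb[OF z(2)] Qb[OF z'(2)] F by auto
        have "common_hpath V E \<alpha> \<beta> z z'" using G_conv[OF G zV(1) zV(2)] z True unfolding W_def by auto
        then have "hpath V E \<alpha> \<beta> z z'" using common_to_hpath[of V E \<alpha> \<beta> z z'] al by blast
        then have "x z * x z' = emb q * (x z' * x z)" using relD[rule_format, OF z(1) z'(1) ne] by blast
        moreover have "eps a b = 1" using True F zz unfolding eps_def by auto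
        ultimately show ?thesis using k1 by (simp add: qcomm_def)
      next
        case False
        have "\<not> hpath V E \<alpha> \<beta> z z'" "\<not> hpath V E \<alpha> \<beta> z' z"
          using hpath_coords[of V E \<alpha> \<beta> z z'] hpath_coords[of V E \<alpha> \<beta> z' z] False by auto
        moreover have "\<not> vpath V E \<alpha> \<beta> z z'" "\<not> vpath V E \<alpha> \<beta> z' z"
          using vpath_coords[of V E \<alpha> \<beta> z z'] vpath_coords[of V E \<alpha> \<beta> z' z] F by auto
        ultimately have "x z * x z' = x z' * x z" using relD[rule_format, OF z(1) z'(1) ne] by blast
        moreover have "eps a b = 0" using False F zz unfolding eps_def by auto
        ultimately show ?thesis using k0 by (simp add: qcomm_def)
      qed
    qed
    have ia: "x z * xi z = 1" "xi z * x z = 1" and ib: "x z' * xi z' = 1" "xi z' * x z' = 1"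
      using inv z(1) z'(1) unfolding W_def by auto
    show ?thesis using qcomm_gen[OF alg q, of x a b "eps a b" xi] cm ia ib zz by simp
  qed
  have main: "qcomm emb q (prod_list (map (gen x xi) LP)) (prod_list (map (gen x xi) LQ))
     (sum_list (map (\<lambda>a. sum_list (map (\<lambda>b. sg a * sg b * eps a b) LQ)) LP))"
    using qcomm_prod[OF alg q, of LP LQ x xi "\<lambda>a b. sg a * sg b * eps a b"] pair by blast
  have inner_sum: "sum_list (map (\<lambda>b. sg a * sg b * eps a b) LQ) = - (sg a * (if \<alpha> (fst a) = A then 1 else 0))"
    if aL: "a \<in> set LP" for a
  proof -
    have za: "fst a \<in> set P" using memL[OF G P(1), of a] aL unfolding LP_def W_def by auto
    have "map (\<lambda>b. sg a * sg b * eps a b) LQ =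
      map (\<lambda>b. sg a * (sg b * (if \<alpha> (fst b) = \<alpha> (fst a) then 1 else 0)) + sg a * (sg b * (if \<beta> (fst b) = \<beta> (fst a) then 1 else 0))) LQ"
      unfolding eps_def by (simp add: algebra_simps)
    then have "sum_list (map (\<lambda>b. sg a * sg b * eps a b) LQ) =
       sg a * sum_list (map (\<lambda>b. sg b * (if \<alpha> (fst b) = \<alpha> (fst a) then 1 else 0)) LQ)
     + sg a * sum_list (map (\<lambda>b. sg b * (if \<beta> (fst b) = \<beta> (fst a) then 1 else 0)) LQ)"
      by (simp only: sum_list_addf sum_list_const_mult)
    also have "\<dots> = sg a * (if \<alpha> (fst a) = A then -1 else 0)"
      using Qcol[OF Pb[OF za]] Qrow[of "\<beta> (fst a)"] by simp
    finally show ?thesis by simp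
  qed
  have "sum_list (map (\<lambda>a. sum_list (map (\<lambda>b. sg a * sg b * eps a b) LQ)) LP)
      = sum_list (map (\<lambda>a. - (sg a * (if \<alpha> (fst a) = A then 1 else 0))) LP)"
    using inner_sum by (simp cong: map_cong)
  also have "\<dots> = -1" using Pcol by (simp only: sum_neg)
  finally have N: "sum_list (map (\<lambda>a. sum_list (map (\<lambda>b. sg a * sg b * eps a b) LQ)) LP) = -1" .
  have km: "kap emb q (-1) = emb (inverse q)" by (simp add: kap_def)
  show ?thesis using main N km wP wQ unfolding W_def by (simp add: qcomm_def)
qed


end
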